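(* Let $\mathcal{Z}=\{(\boldsymbol{z}_i,y_i)\}_{i=1}^{n}$ be labeled representations with $\|\boldsymbol{z}_i\|_2=1$ and labels $y_i\in\{1,\dots,N_C\}$; let $\mathcal{C}_k=\{i: y_i=k\}$ be the set of support samples of class $k$. For each class $k$ let $\boldsymbol{c}_k$ be a prototype representation with $\|\boldsymbol{c}_k\|_2=1$, and for each sample $i$ write $\boldsymbol{c}_i$ for the (expanded) prototype of its class, i.e. the $n$ prototype representations $\{\boldsymbol{c}_i\}_{i=1}^n$ satisfy $\boldsymbol{c}_i=\boldsymbol{c}_{y_i}$. Define \[ \mathcal{L}_{\rm SCE}=-\frac{1}{n}\sum_{i=1}^{n}\log\frac{\exp(\boldsymbol{z}_i^{\top}\boldsymbol{c}_i)}{\sum_{j=1}^{n}\exp(\boldsymbol{z}_i^{\top}\boldsymbol{c}_j)}-\frac{1}{n}\sum_{i=1}^{n}\log\frac{\exp(\boldsymbol{c}_i^{\top}\boldsymbol{z}_i)}{\sum_{j=1}^{n}\exp(\boldsymbol{c}_i^{\top}\boldsymbol{z}_j)}. \] Then \[ \mathcal{L}_{\rm SCE}\ \ge\ -\frac{2}{n}\sum_{i=1}^{n}\boldsymbol{z}_i^{\top}\boldsymbol{c}_i+\frac{2}{n}\sum_{i=1}^{n}\sum_{k=1}^{N_C}\frac{|\mathcal{C}_k|}{n}\boldsymbol{z}_i^{\top}\boldsymbol{c}_k. \]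
   Context: In this setting (contrastive prototype–image adaptation), the prototype embeddings are expanded to one row per support sample via $YY^{\top}$ applied to the embeddings, where $Y$ is the one-hot label matrix, so the $i$-th prototype representation is the prototype representation of the class of sample $i$; there are thus $|\mathcal{C}_k|$ identical copies of $\boldsymbol{c}_k$ among $\boldsymbol{c}_1,\dots,\boldsymbol{c}_n$. *)

theory Defs
  imports "HOL-Analysis.Analysis"
begin

text \<open>Samples are indexed by 1..n, classes by 1..NC. z i is the representation of sample i,
  y i its label, c k the prototype of class k; the expanded prototype of sample i is c (y i).\<close>

definition class_set :: "nat \<Rightarrow> (nat \<Rightarrow> nat) \<Rightarrow> nat \<Rightarrow> nat set" where
  "class_set n y k = {i \<in> {1..n}. y i = k}"

definition L_SCE :: "nat \<Rightarrow> (nat \<Rightarrow> real^'d) \<Rightarrow> (nat \<Rightarrow> real^'d) \<Rightarrow> real" where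
  "L_SCE n z cc =
     - (1 / real n) * (\<Sum>i=1..n. ln (exp (z i \<bullet> cc i) / (\<Sum>j=1..n. exp (z i \<bullet> cc j))))
     - (1 / real n) * (\<Sum>i=1..n. ln (exp (cc i \<bullet> z i) / (\<Sum>j=1..n. exp (cc i \<bullet> z j))))"

end

theory Submission
  imports Defs
begin

lemma lse_bound:
  fixes x :: "nat \<Rightarrow> real" and n :: nat
  assumes "n \<ge> 1"
  shows "ln (\<Sum>j=1..n. exp (x j)) \<ge> ln (real n) + (\<Sum>j=1..n. x j) / real n"
proof -
  define m where "m = (\<Sum>j=1..n. x j) / real n"
  have np: "real n > 0" using assms by simp
  have "(\<Sum>j=1..n. exp m * (1 + (x j - m))) \<le> (\<Sum>j=1..n. exp (x j))"
  proof (rule sum_mono)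
    fix j
    have "exp m * (1 + (x j - m)) \<le> exp m * exp (x j - m)"
      by (intro mult_left_mono exp_ge_add_one_self) simp
    also have "\<dots> = exp (x j)" by (simp add: exp_diff)
    finally show "exp m * (1 + (x j - m)) \<le> exp (x j)" .
  qed
  moreover have "(\<Sum>j=1..n. exp m * (1 + (x j - m))) = exp m * real n"
  proof -
    have "(\<Sum>j=1..n. exp m * (1 + (x j - m))) = exp m * (real n + (\<Sum>j=1..n. x j) - real n * m)"
      by (simp add: sum_distrib_left[symmetric] sum.distrib sum_subtractf algebra_simps)
    also have "real n * m = (\<Sum>j=1..n. x j)" using np by (simp add: m_def)
    finally show ?thesis by simp
  qed
  ultimately have "exp m * real n \<le> (\<Sum>j=1..n. exp (x j))" by simp
  hence "ln (exp m * real n) \<le> ln (\<Sum>j=1..n. exp (x j))"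
  proof -
    have "exp m * real n > 0" using np by simp
    with \<open>exp m * real n \<le> _\<close> show ?thesis by (subst ln_le_cancel_iff) auto
  qed
  moreover have "ln (exp m * real n) = m + ln (real n)" using np by (simp add: ln_mult)
  ultimately show ?thesis by (simp add: m_def)
qed

lemma group_sum:
  fixes f :: "nat \<Rightarrow> real"
  assumes "\<And>i. i \<in> {1..n} \<Longrightarrow> y i \<in> {1..NC}"
  shows "(\<Sum>j=1..n. f (y j)) = (\<Sum>k=1..NC. real (card (class_set n y k)) * f k)"
proof -
  have "(\<Sum>j=1..n. f (y j)) = (\<Sum>k=1..NC. \<Sum>j\<in>{j\<in>{1..n}. y j = k}. f (y j))"
    using assms by (intro sum.group[symmetric]) auto
  also have "\<dots> = (\<Sum>k=1..NC. real (card (class_set n y k)) * f k)"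
    by (intro sum.cong refl) (simp add: class_set_def)
  finally show ?thesis .
qed

theorem theorem3:
  fixes n NC :: nat and z :: "nat \<Rightarrow> real^'d" and y :: "nat \<Rightarrow> nat"
    and c :: "nat \<Rightarrow> real^'d"
  assumes "n \<ge> 1"
    and "\<And>i. i \<in> {1..n} \<Longrightarrow> norm (z i) = 1"
    and "\<And>i. i \<in> {1..n} \<Longrightarrow> y i \<in> {1..NC}"
    and "\<And>k. k \<in> {1..NC} \<Longrightarrow> norm (c k) = 1"
  shows "L_SCE n z (\<lambda>i. c (y i)) \<ge>
     - (2 / real n) * (\<Sum>i=1..n. z i \<bullet> c (y i))
     + (2 / real n) * (\<Sum>i=1..n. \<Sum>k=1..NC.
          (real (card (class_set n y k)) / real n) * (z i \<bullet> c k))"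
proof -
  have np: "real n > 0" using assms(1) by simp
  define a where "a i = z i \<bullet> c (y i)" for i
  define S where "S i = (\<Sum>j=1..n. exp (z i \<bullet> c (y j)))" for i
  define T where "T i = (\<Sum>j=1..n. exp (c (y i) \<bullet> z j))" for i
  define D where "D = (\<Sum>i=1..n. \<Sum>j=1..n. z i \<bullet> c (y j))"
  have Spos: "S i > 0" for i unfolding S_def using assms(1)
    by (intro sum_pos) auto
  have Tpos: "T i > 0" for i unfolding T_def using assms(1)
    by (intro sum_pos) auto
  have L: "L_SCE n z (\<lambda>i. c (y i)) = (1 / real n) * (\<Sum>i=1..n. ln (S i) - a i)
        + (1 / real n) * (\<Sum>i=1..n. ln (T i) - a i)"
  proof -
    have e1: "ln (exp (z i \<bullet> c (y i)) / S i) = a i - ln (S i)" for i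
      using Spos[of i] by (simp add: ln_div a_def)
    have e2: "ln (exp (c (y i) \<bullet> z i) / T i) = a i - ln (T i)" for i
      using Tpos[of i] by (simp add: ln_div a_def inner_commute)
    show ?thesis unfolding L_SCE_def S_def[symmetric] T_def[symmetric]
      apply (simp only: e1 e2)
      by (simp add: sum_subtractf algebra_simps)
  qed
  have bS: "ln (S i) \<ge> ln (real n) + (\<Sum>j=1..n. z i \<bullet> c (y j)) / real n" for i
    unfolding S_def by (rule lse_bound[OF assms(1)])
  have bT: "ln (T i) \<ge> ln (real n) + (\<Sum>j=1..n. z j \<bullet> c (y i)) / real n" for i
    unfolding T_def using lse_bound[OF assms(1), of "\<lambda>j. c (y i) \<bullet> z j"]
    by (simp add: inner_commute)
  have s1: "(\<Sum>i=1..n. ln (S i) - a i) \<ge> (\<Sum>i=1..n. ln (real n) + (\<Sum>j=1..n. z i \<bullet> c (y j)) / real n - a i)"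
    by (intro sum_mono) (use bS in auto)
  have s2: "(\<Sum>i=1..n. ln (T i) - a i) \<ge> (\<Sum>i=1..n. ln (real n) + (\<Sum>j=1..n. z j \<bullet> c (y i)) / real n - a i)"
    by (intro sum_mono) (use bT in auto)
  have r1: "(\<Sum>i=1..n. ln (real n) + (\<Sum>j=1..n. z i \<bullet> c (y j)) / real n - a i)
      = real n * ln (real n) + D / real n - (\<Sum>i=1..n. a i)"
    by (simp add: sum.distrib sum_subtractf D_def sum_divide_distrib)
  have r2: "(\<Sum>i=1..n. ln (real n) + (\<Sum>j=1..n. z j \<bullet> c (y i)) / real n - a i)
      = real n * ln (real n) + D / real n - (\<Sum>i=1..n. a i)"
    by (simp add: sum.distrib sum_subtractf D_def sum_divide_distrib) (rule sum.swap)
  have lnn: "ln (real n) \<ge> 0" using assms(1) by simp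
  have D: "D = (\<Sum>i=1..n. \<Sum>k=1..NC. real (card (class_set n y k)) * (z i \<bullet> c k))"
    unfolding D_def by (intro sum.cong refl group_sum assms(3)) auto
  have rhs: "(\<Sum>i=1..n. \<Sum>k=1..NC. (real (card (class_set n y k)) / real n) * (z i \<bullet> c k)) = D / real n"
    unfolding D by (simp add: sum_divide_distrib)
  have "L_SCE n z (\<lambda>i. c (y i)) \<ge> (1 / real n) * (real n * ln (real n) + D / real n - (\<Sum>i=1..n. a i))
        + (1 / real n) * (real n * ln (real n) + D / real n - (\<Sum>i=1..n. a i))"
    unfolding L using s1 s2 r1 r2 np
    by (intro add_mono mult_left_mono) auto
  moreover have "(1 / real n) * (real n * ln (real n) + D / real n - (\<Sum>i=1..n. a i))
        + (1 / real n) * (real n * ln (real n) + D / real n - (\<Sum>i=1..n. a i))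
      = 2 * ln (real n) - (2 / real n) * (\<Sum>i=1..n. a i) + (2 / real n) * (D / real n)"
    using np by (simp add: field_simps)
  ultimately show ?thesis unfolding rhs a_def using lnn by linarith
qed

end
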